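(* Let $P$ be a 6-stack. If $Q$ is a proper retract of $P$ which (with the induced order) is isomorphic to a tower of sections, then $Q$ is a 4-tower.
   Context: All posets are finite. For a poset $P$ and $p\in P$, the rank $r(p)$ of $p$ is the largest $m$ such that there is a chain $p_0<\dots<p_m=p$ in $P$. $P$ is ranked of rank $r(P)$ if every maximal chain has exactly $r(P)+1$ elements. For $0\le i\le j$, $P(i,j)=\{p\in P:i\le r(p)\le j\}$, $P(i)=P(i,i)$ (induced order). A subset $Q\subseteq P$ (induced order) is a retract of $P$ if there is an order-preserving $f:P\to Q$ with $f(q)=q$ for all $q\in Q$; it is proper if $Q\ne P$. The 6-crown $C_6$ is the poset on $\{x_0,x_1,x_2,y_0,y_1,y_2\}$ whose only strict comparabilities are $x_0<y_0>x_1<y_1>x_2<y_2>x_0$. A 6-stack is a ranked poset $P$ of rank $n\ge1$ such that $P(i,i+1)\cong C_6$ for each $0\le i<n$. The ordinal sum of posets $P_1,\dots,P_k$ ($k\ge1$) is their disjoint union ordered by the orders of the $P_i$ together with $p<q$ whenever $p\in P_i,q\in P_j,i<j$. A 4-tower is an ordinal sum of one or more two-element antichains. A section is either a two-element antichain or a poset on the set $\{[i,k]: 0\le i\le 2,\ 0\le k\le n\}$ (with $3(n+1)$ distinct elements), for some $n\ge 1$, such that: (1) $[i,k]<[i,l]$ whenever $0\le k<l\le n$; (2) for each $k$, $\{[0,k],[1,k],[2,k]\}$ is an antichain; (3) $[i,k]<[j,l]$ implies $[i+1,k]<[j+1,l]$ (first indices mod $3$); (4) for each $0\le k<n$ there are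 $i,j$ with $[i,k]\not<[j,k+1]$. A tower of sections is an ordinal sum of one or more sections. *)

theory Defs
  imports Main
begin

definition poset_on :: "'a set \<Rightarrow> ('a \<Rightarrow> 'a \<Rightarrow> bool) \<Rightarrow> bool" where
  "poset_on S le \<longleftrightarrow> finite S \<and>
     (\<forall>x\<in>S. le x x) \<and>
     (\<forall>x\<in>S. \<forall>y\<in>S. le x y \<and> le y x \<longrightarrow> x = y) \<and>
     (\<forall>x\<in>S. \<forall>y\<in>S. \<forall>z\<in>S. le x y \<and> le y z \<longrightarrow> le x z)"

definition lt :: "('a \<Rightarrow> 'a \<Rightarrow> bool) \<Rightarrow> 'a \<Rightarrow> 'a \<Rightarrow> bool" where
  "lt le x y \<longleftrightarrow> le x y \<and> x \<noteq> y"

definition rank :: "'a set \<Rightarrow> ('a \<Rightarrow> 'a \<Rightarrow> bool) \<Rightarrow> 'a \<Rightarrow> nat" where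
  "rank S le p = (GREATEST m. \<exists>xs. length xs = Suc m \<and> set xs \<subseteq> S \<and>
                     sorted_wrt (lt le) xs \<and> last xs = p)"

definition is_chain :: "'a set \<Rightarrow> ('a \<Rightarrow> 'a \<Rightarrow> bool) \<Rightarrow> 'a set \<Rightarrow> bool" where
  "is_chain S le C \<longleftrightarrow> C \<subseteq> S \<and> (\<forall>x\<in>C. \<forall>y\<in>C. le x y \<or> le y x)"

definition maximal_chain :: "'a set \<Rightarrow> ('a \<Rightarrow> 'a \<Rightarrow> bool) \<Rightarrow> 'a set \<Rightarrow> bool" where
  "maximal_chain S le C \<longleftrightarrow> is_chain S le C \<and>
     (\<forall>D. is_chain S le D \<and> C \<subseteq> D \<longrightarrow> D = C)"

definition ranked_of_rank :: "'a set \<Rightarrow> ('a \<Rightarrow> 'a \<Rightarrow> bool) \<Rightarrow> nat \<Rightarrow> bool" where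
  "ranked_of_rank S le n \<longleftrightarrow> poset_on S le \<and>
     (\<forall>C. maximal_chain S le C \<longrightarrow> card C = Suc n)"

definition levels :: "'a set \<Rightarrow> ('a \<Rightarrow> 'a \<Rightarrow> bool) \<Rightarrow> nat \<Rightarrow> nat \<Rightarrow> 'a set" where
  "levels S le i j = {p\<in>S. i \<le> rank S le p \<and> rank S le p \<le> j}"

definition order_iso :: "'a set \<Rightarrow> ('a \<Rightarrow> 'a \<Rightarrow> bool) \<Rightarrow> 'b set \<Rightarrow> ('b \<Rightarrow> 'b \<Rightarrow> bool) \<Rightarrow> bool" where
  "order_iso S le T le' \<longleftrightarrow> (\<exists>f. bij_betw f S T \<and>
     (\<forall>x\<in>S. \<forall>y\<in>S. le x y \<longleftrightarrow> le' (f x) (f y)))"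

(* The 6-crown: x_i = i, y_i = 3 + i (i = 0,1,2); x_i < y_i and x_{i+1 mod 3} < y_i *)
definition crown6 :: "nat set" where "crown6 = {0..5}"

definition crown6_le :: "nat \<Rightarrow> nat \<Rightarrow> bool" where
  "crown6_le a b \<longleftrightarrow> a = b \<or>
     (a < 3 \<and> 3 \<le> b \<and> (a = b - 3 \<or> a = (b - 3 + 1) mod 3))"

definition six_stack :: "'a set \<Rightarrow> ('a \<Rightarrow> 'a \<Rightarrow> bool) \<Rightarrow> bool" where
  "six_stack S le \<longleftrightarrow> (\<exists>n\<ge>1. ranked_of_rank S le n \<and>
     (\<forall>i<n. order_iso (levels S le i (Suc i)) le crown6 crown6_le))"

definition retract :: "'a set \<Rightarrow> ('a \<Rightarrow> 'a \<Rightarrow> bool) \<Rightarrow> 'a set \<Rightarrow> bool" where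
  "retract P le Q \<longleftrightarrow> Q \<subseteq> P \<and> (\<exists>f. (\<forall>x\<in>P. f x \<in> Q) \<and>
     (\<forall>x\<in>P. \<forall>y\<in>P. le x y \<longrightarrow> le (f x) (f y)) \<and> (\<forall>q\<in>Q. f q = q))"

definition two_antichain :: "'a set \<Rightarrow> ('a \<Rightarrow> 'a \<Rightarrow> bool) \<Rightarrow> bool" where
  "two_antichain S le \<longleftrightarrow> card S = 2 \<and> (\<forall>x\<in>S. \<forall>y\<in>S. le x y \<longrightarrow> x = y)"

definition ordinal_sum_of ::
  "('a set \<Rightarrow> ('a \<Rightarrow> 'a \<Rightarrow> bool) \<Rightarrow> bool) \<Rightarrow> 'a set \<Rightarrow> ('a \<Rightarrow> 'a \<Rightarrow> bool) \<Rightarrow> bool" where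
  "ordinal_sum_of PP S le \<longleftrightarrow> (\<exists>k\<ge>1. \<exists>B :: nat \<Rightarrow> 'a set.
      S = (\<Union>i<k. B i) \<and>
      (\<forall>i<k. \<forall>j<k. i \<noteq> j \<longrightarrow> B i \<inter> B j = {}) \<and>
      (\<forall>i<k. PP (B i) le) \<and>
      (\<forall>i<k. \<forall>j<k. i < j \<longrightarrow> (\<forall>x\<in>B i. \<forall>y\<in>B j. le x y \<and> \<not> le y x)))"

definition four_tower :: "'a set \<Rightarrow> ('a \<Rightarrow> 'a \<Rightarrow> bool) \<Rightarrow> bool" where
  "four_tower S le \<longleftrightarrow> poset_on S le \<and> ordinal_sum_of two_antichain S le"

definition section_carrier :: "nat \<Rightarrow> (nat \<times> nat) set" where
  "section_carrier n = {0..2} \<times> {0..n}"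

definition section_poset :: "nat \<Rightarrow> (nat \<times> nat \<Rightarrow> nat \<times> nat \<Rightarrow> bool) \<Rightarrow> bool" where
  "section_poset n R \<longleftrightarrow> n \<ge> 1 \<and> poset_on (section_carrier n) R \<and>
     (\<forall>i\<le>2. \<forall>k l. k < l \<and> l \<le> n \<longrightarrow> lt R (i,k) (i,l)) \<and>
     (\<forall>k\<le>n. \<forall>i\<le>2. \<forall>j\<le>2. R (i,k) (j,k) \<longrightarrow> i = j) \<and>
     (\<forall>i\<le>2. \<forall>j\<le>2. \<forall>k\<le>n. \<forall>l\<le>n.
        lt R (i,k) (j,l) \<longrightarrow> lt R ((i+1) mod 3, k) ((j+1) mod 3, l)) \<and>
     (\<forall>k<n. \<exists>i\<le>2. \<exists>j\<le>2. \<not> lt R (i,k) (j, Suc k))"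

definition is_section :: "'a set \<Rightarrow> ('a \<Rightarrow> 'a \<Rightarrow> bool) \<Rightarrow> bool" where
  "is_section S le \<longleftrightarrow> two_antichain S le \<or>
     (\<exists>n R. section_poset n R \<and> order_iso S le (section_carrier n) R)"

definition tower_of_sections :: "'a set \<Rightarrow> ('a \<Rightarrow> 'a \<Rightarrow> bool) \<Rightarrow> bool" where
  "tower_of_sections S le \<longleftrightarrow> poset_on S le \<and> ordinal_sum_of is_section S le"

end

theory Submission
  imports Defs
begin

definition chn :: "'a set \<Rightarrow> ('a \<Rightarrow> 'a \<Rightarrow> bool) \<Rightarrow> nat \<Rightarrow> 'a \<Rightarrow> bool" where
  "chn P le m p \<longleftrightarrow> (\<exists>xs. length xs = Suc m \<and> set xs \<subseteq> P \<and> sorted_wrt (lt le) xs \<and> last xs = p)"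

lemma rank_chn: "rank P le p = (GREATEST m. chn P le m p)"
  unfolding rank_def chn_def by simp

lemma sorted_lt_distinct: "sorted_wrt (lt le) xs \<Longrightarrow> distinct xs"
  by (induction xs) (auto simp: lt_def)

lemma chn_bound: assumes "finite P" "chn P le m p" shows "m < card P"
proof -
  obtain xs where xs: "length xs = Suc m" "set xs \<subseteq> P" "sorted_wrt (lt le) xs"
    using assms(2) unfolding chn_def by blast
  have "distinct xs" using xs(3) by (rule sorted_lt_distinct)
  then have "card (set xs) = Suc m" using xs(1) by (simp add: distinct_card)
  moreover have "card (set xs) \<le> card P" using xs(2) assms(1) by (simp add: card_mono)
  ultimately show ?thesis by simp
qed

lemma chn0: "p \<in> P \<Longrightarrow> chn P le 0 p"
  unfolding chn_def by (rule exI[of _ "[p]"]) simp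

lemma rank_ex: assumes "finite P" "p \<in> P" shows "chn P le (rank P le p) p"
proof -
  have "\<And>y. chn P le y p \<Longrightarrow> y \<le> card P" using chn_bound[OF assms(1)] less_imp_le by blast
  then show ?thesis unfolding rank_chn by (rule GreatestI_nat[where P="\<lambda>m. chn P le m p", OF chn0[OF assms(2)]])
qed

lemma rank_ge: assumes "finite P" "chn P le m p" shows "m \<le> rank P le p"
proof -
  have "\<And>y. chn P le y p \<Longrightarrow> y \<le> card P" using chn_bound[OF assms(1)] less_imp_le by blast
  then show ?thesis unfolding rank_chn by (rule Greatest_le_nat[where P="\<lambda>m. chn P le m p", OF assms(2)])
qed

lemma last_rel: assumes "sorted_wrt R xs" "xs \<noteq> []" "a \<in> set xs"
  shows "a = last xs \<or> R a (last xs)"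
proof -
  have "xs = butlast xs @ [last xs]" using assms(2) by simp
  then have "sorted_wrt R (butlast xs @ [last xs])" using assms(1) by simp
  then have "\<forall>b\<in>set (butlast xs). R b (last xs)" by (simp add: sorted_wrt_append)
  moreover have "a \<in> set (butlast xs) \<or> a = last xs"
    using assms(3) \<open>xs = butlast xs @ [last xs]\<close> by (metis Un_iff empty_iff empty_set set_ConsD set_append)
  ultimately show ?thesis by blast
qed

lemma rank_lt:
  assumes po: "poset_on P le" and xy: "x \<in> P" "y \<in> P" "le x y" "x \<noteq> y"
  shows "rank P le x < rank P le y"
proof -
  have fin: "finite P" using po unfolding poset_on_def by blast
  obtain xs where xs: "length xs = Suc (rank P le x)" "set xs \<subseteq> P" "sorted_wrt (lt le) xs" "last xs = x"
    using rank_ex[OF fin xy(1), of le] unfolding chn_def by blast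
  have ne: "xs \<noteq> []" using xs(1) by auto
  have "\<forall>a\<in>set xs. lt le a y"
  proof
    fix a assume a: "a \<in> set xs"
    then have aP: "a \<in> P" using xs(2) by blast
    have "a = x \<or> lt le a x" using last_rel[OF xs(3) ne a] xs(4) by simp
    then have "le a x" using po aP unfolding lt_def poset_on_def by blast
    then have "le a y" using po aP xy unfolding poset_on_def by blast
    moreover have "a \<noteq> y"
    proof
      assume "a = y"
      then have "le y x" using \<open>le a x\<close> by simp
      then show False using po xy unfolding poset_on_def by blast
    qed
    ultimately show "lt le a y" unfolding lt_def by blast
  qed
  then have "chn P le (Suc (rank P le x)) y"
    unfolding chn_def
    by (rule_tac x="xs @ [y]" in exI) (use xs xy in \<open>auto simp: sorted_wrt_append\<close>)
  then show ?thesis using rank_ge[OF fin] by fastforce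
qed

lemma rank_pred:
  assumes po: "poset_on P le" and p: "p \<in> P" and r: "rank P le p = Suc r"
  shows "\<exists>z\<in>P. le z p \<and> z \<noteq> p \<and> rank P le z = r"
proof -
  have fin: "finite P" using po unfolding poset_on_def by blast
  obtain xs where xs: "length xs = Suc (Suc r)" "set xs \<subseteq> P" "sorted_wrt (lt le) xs" "last xs = p"
    using rank_ex[OF fin p, of le] r unfolding chn_def by auto
  have ne: "xs \<noteq> []" using xs(1) by auto
  define ys where "ys = butlast xs"
  have xs_eq: "xs = ys @ [p]" using ne xs(4) unfolding ys_def by (metis append_butlast_last_id)
  have ys: "length ys = Suc r" "set ys \<subseteq> P" "sorted_wrt (lt le) ys"
    using xs xs_eq by (auto simp: sorted_wrt_append)
  have all: "\<forall>a\<in>set ys. lt le a p" using xs(3) xs_eq by (simp add: sorted_wrt_append)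
  define z where "z = last ys"
  have yne: "ys \<noteq> []" using ys(1) by auto
  have zin: "z \<in> set ys" unfolding z_def using yne by simp
  have zP: "z \<in> P" using zin ys(2) by blast
  have "chn P le r z" unfolding chn_def z_def using ys by blast
  then have "r \<le> rank P le z" by (rule rank_ge[OF fin])
  moreover have "lt le z p" using all zin by blast
  then have "rank P le z < rank P le p" using rank_lt[OF po zP p] unfolding lt_def by blast
  ultimately show ?thesis using zP \<open>lt le z p\<close> r unfolding lt_def by (intro bexI[of _ z]) auto
qed


lemma chain_ext:
  assumes po: "poset_on P le" and C: "is_chain P le C"
  shows "\<exists>D. maximal_chain P le D \<and> C \<subseteq> D"
proof -
  have fin: "finite P" using po unfolding poset_on_def by blast
  define F where "F = {D. is_chain P le D \<and> C \<subseteq> D}"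
  have Fsub: "F \<subseteq> Pow P" unfolding F_def is_chain_def by blast
  have finF: "finite F" using Fsub fin by (meson finite_Pow_iff finite_subset)
  have CF: "C \<in> F" using C unfolding F_def by blast
  define m where "m = Max (card ` F)"
  have "m \<in> card ` F" unfolding m_def using finF CF by (intro Max_in) auto
  then obtain D where D: "D \<in> F" "card D = m" by blast
  have ge: "\<And>E. E \<in> F \<Longrightarrow> card E \<le> m" unfolding m_def using finF by (intro Max_ge) auto
  have "maximal_chain P le D"
    unfolding maximal_chain_def
  proof (intro conjI allI impI)
    show "is_chain P le D" using D unfolding F_def by blast
    fix E assume E: "is_chain P le E \<and> D \<subseteq> E"
    then have "E \<in> F" using D unfolding F_def by blast
    then have "card E \<le> card D" using ge D by simp
    moreover have "finite E" using E fin unfolding is_chain_def by (meson finite_subset)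
    ultimately show "E = D" using E by (metis card_seteq)
  qed
  then show ?thesis using D unfolding F_def by blast
qed

lemma rank_le_n:
  assumes r: "ranked_of_rank P le n" and p: "p \<in> P"
  shows "rank P le p \<le> n"
proof -
  have po: "poset_on P le" using r unfolding ranked_of_rank_def by blast
  have fin: "finite P" using po unfolding poset_on_def by blast
  obtain xs where xs: "length xs = Suc (rank P le p)" "set xs \<subseteq> P" "sorted_wrt (lt le) xs"
    using rank_ex[OF fin p, of le] unfolding chn_def by blast
  have "is_chain P le (set xs)"
    unfolding is_chain_def
  proof (intro conjI ballI)
    show "set xs \<subseteq> P" by (rule xs(2))
    fix a b assume a: "a \<in> set xs" and b: "b \<in> set xs"
    obtain i where i: "i < length xs" "a = xs ! i" using a by (auto simp: in_set_conv_nth)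
    obtain j where j: "j < length xs" "b = xs ! j" using b by (auto simp: in_set_conv_nth)
    have srt: "\<forall>i j. i < j \<longrightarrow> j < length xs \<longrightarrow> lt le (xs ! i) (xs ! j)"
      using xs(3) by (simp add: sorted_wrt_iff_nth_less)
    have aP: "a \<in> P" using a xs(2) by blast
    show "le a b \<or> le b a"
    proof (cases i j rule: linorder_cases)
      case less then show ?thesis using srt i j unfolding lt_def by blast
    next
      case equal then show ?thesis using i j aP po unfolding poset_on_def by simp
    next
      case greater then show ?thesis using srt i j unfolding lt_def by blast
    qed
  qed
  then obtain D where D: "maximal_chain P le D" "set xs \<subseteq> D" using chain_ext[OF po] by blast
  have "card D = Suc n" using D r unfolding ranked_of_rank_def by blast
  moreover have "finite D" using D fin unfolding maximal_chain_def is_chain_def by (meson finite_subset)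
  ultimately have "card (set xs) \<le> Suc n" using D by (metis card_mono)
  moreover have "card (set xs) = Suc (rank P le p)"
    using xs(1) sorted_lt_distinct[OF xs(3)] by (simp add: distinct_card)
  ultimately show ?thesis by simp
qed

lemma crown_fact: "a < 3 \<Longrightarrow> 3 \<le> b \<Longrightarrow> b \<le> 5 \<Longrightarrow> (\<not> crown6_le a b \<longleftrightarrow> b = 3 + (a + 1) mod 3)"
proof -
  assume "a < 3" "3 \<le> b" "b \<le> 5"
  then have "a = 0 \<or> a = 1 \<or> a = 2" "b = 3 \<or> b = 4 \<or> b = 5" by auto
  then show ?thesis unfolding crown6_le_def by (elim disjE) simp_all
qed


lemma mod3_inj: "(a::nat) < 3 \<Longrightarrow> a' < 3 \<Longrightarrow> (a + 1) mod 3 = (a' + 1) mod 3 \<Longrightarrow> a = a'"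
proof -
  assume "a < 3" "a' < 3" "(a + 1) mod 3 = (a' + 1) mod 3"
  moreover have "a = 0 \<or> a = 1 \<or> a = 2" "a' = 0 \<or> a' = 1 \<or> a' = 2" using calculation by auto
  ultimately show ?thesis by (elim disjE) simp_all
qed

lemma mod3_pre: "3 \<le> (b::nat) \<Longrightarrow> b \<le> 5 \<Longrightarrow> b = 3 + ((b - 3 + 2) mod 3 + 1) mod 3"
proof -
  assume "3 \<le> b" "b \<le> 5"
  then have "b = 3 \<or> b = 4 \<or> b = 5" by auto
  then show ?thesis by (elim disjE) simp_all
qed

lemma crown_levels:
  assumes po: "poset_on P le" and iso: "order_iso (levels P le i (Suc i)) le crown6 crown6_le"
  shows "card {p\<in>P. rank P le p = i} = 3" and "card {p\<in>P. rank P le p = Suc i} = 3"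
    and "\<And>x. x \<in> P \<Longrightarrow> rank P le x = i \<Longrightarrow> \<exists>y\<in>P. rank P le y = Suc i \<and> \<not> le x y"
    and "\<And>x y y'. x \<in> P \<Longrightarrow> rank P le x = i \<Longrightarrow> y \<in> P \<Longrightarrow> y' \<in> P \<Longrightarrow> rank P le y = Suc i
          \<Longrightarrow> rank P le y' = Suc i \<Longrightarrow> \<not> le x y \<Longrightarrow> \<not> le x y' \<Longrightarrow> y = y'"
    and "\<And>y. y \<in> P \<Longrightarrow> rank P le y = Suc i \<Longrightarrow> \<exists>x\<in>P. rank P le x = i \<and> \<not> le x y"
    and "\<And>y x x'. y \<in> P \<Longrightarrow> rank P le y = Suc i \<Longrightarrow> x \<in> P \<Longrightarrow> x' \<in> P \<Longrightarrow> rank P le x = i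
          \<Longrightarrow> rank P le x' = i \<Longrightarrow> \<not> le x y \<Longrightarrow> \<not> le x' y \<Longrightarrow> x = x'"
proof -
  define R where "R = rank P le"
  define Lv where "Lv = levels P le i (Suc i)"
  have Lv_iff: "\<And>p. p \<in> Lv \<longleftrightarrow> p \<in> P \<and> (R p = i \<or> R p = Suc i)"
    unfolding Lv_def levels_def R_def by auto
  obtain h where bij: "bij_betw h Lv crown6" and ordh: "\<forall>x\<in>Lv. \<forall>y\<in>Lv. le x y \<longleftrightarrow> crown6_le (h x) (h y)"
    using iso unfolding order_iso_def Lv_def by blast
  have inj: "inj_on h Lv" and img: "h ` Lv = crown6" using bij unfolding bij_betw_def by auto
  have c6: "crown6 = {0..5}" unfolding crown6_def by simp
  have low: "\<And>x. x \<in> P \<Longrightarrow> R x = i \<Longrightarrow> h x < 3"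
  proof (rule ccontr)
    fix x assume x: "x \<in> P" "R x = i" "\<not> h x < 3"
    have xL: "x \<in> Lv" using x Lv_iff by blast
    have "h x \<in> crown6" using xL img by blast
    then have hx: "h x \<le> 5" unfolding crown6_def by auto
    have "h x - 3 \<in> crown6" using hx by (simp add: crown6_def)
    then obtain z where z: "z \<in> Lv" "h z = h x - 3" using img by (metis imageE)
    have "crown6_le (h z) (h x)" unfolding crown6_le_def using z x hx by auto
    then have "le z x" using ordh z xL by blast
    moreover have "z \<noteq> x" using z x by auto
    ultimately have "R z < R x" unfolding R_def using rank_lt[OF po] z xL Lv_iff by blast
    then show False using z Lv_iff x by auto
  qed
  have up: "\<And>y. y \<in> P \<Longrightarrow> R y = Suc i \<Longrightarrow> 3 \<le> h y"
  proof -
    fix y assume y: "y \<in> P" "R y = Suc i"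
    obtain z where z: "z \<in> P" "le z y" "z \<noteq> y" "R z = i" using rank_pred[OF po y(1)] y unfolding R_def by blast
    have zL: "z \<in> Lv" and yL: "y \<in> Lv" using z y Lv_iff by auto
    have "crown6_le (h z) (h y)" using ordh zL yL z by blast
    moreover have "h z \<noteq> h y" using inj zL yL z by (metis inj_onD)
    ultimately show "3 \<le> h y" unfolding crown6_le_def by auto
  qed
  have img_low: "\<And>a. a < 3 \<Longrightarrow> \<exists>x\<in>P. R x = i \<and> h x = a"
  proof -
    fix a :: nat assume a: "a < 3"
    then have "a \<in> crown6" by (simp add: crown6_def)
    then obtain x where x: "x \<in> Lv" "h x = a" using img by (metis imageE)
    show "\<exists>x\<in>P. R x = i \<and> h x = a" using x up[of x] a Lv_iff by fastforce
  qed
  have img_up: "\<And>b. 3 \<le> b \<Longrightarrow> b \<le> 5 \<Longrightarrow> \<exists>y\<in>P. R y = Suc i \<and> h y = b"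
  proof -
    fix b :: nat assume b: "3 \<le> b" "b \<le> 5"
    then have "b \<in> crown6" by (simp add: crown6_def)
    then obtain y where y: "y \<in> Lv" "h y = b" using img by (metis imageE)
    show "\<exists>y\<in>P. R y = Suc i \<and> h y = b" using y low[of y] b Lv_iff by fastforce
  qed
  have hle5: "\<And>x. x \<in> Lv \<Longrightarrow> h x \<le> 5" using img by (auto simp: crown6_def)
  have eqA: "h ` {p\<in>P. R p = i} = {0..<3}"
  proof
    show "h ` {p \<in> P. R p = i} \<subseteq> {0..<3}" using low by auto
    show "{0..<3} \<subseteq> h ` {p \<in> P. R p = i}"
    proof
      fix a assume "a \<in> {0..<(3::nat)}"
      then obtain x where "x\<in>P" "R x = i" "h x = a" using img_low by auto
      then show "a \<in> h ` {p \<in> P. R p = i}" by (intro image_eqI[of _ h x]) auto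
    qed
  qed
  have injA: "inj_on h {p\<in>P. R p = i}" using inj by (rule inj_on_subset) (auto simp: Lv_iff)
  have "card {p\<in>P. R p = i} = 3" using card_image[OF injA] eqA by simp
  then show "card {p\<in>P. rank P le p = i} = 3" unfolding R_def .
  have eqB: "h ` {p\<in>P. R p = Suc i} = {3..<6}"
  proof
    show "h ` {p \<in> P. R p = Suc i} \<subseteq> {3..<6}" using up hle5 Lv_iff by fastforce
    show "{3..<6} \<subseteq> h ` {p \<in> P. R p = Suc i}"
    proof
      fix a assume "a \<in> {3..<(6::nat)}"
      then obtain x where "x\<in>P" "R x = Suc i" "h x = a" using img_up[of a] by auto
      then show "a \<in> h ` {p \<in> P. R p = Suc i}" by (intro image_eqI[of _ h x]) auto
    qed
  qed
  have injB: "inj_on h {p\<in>P. R p = Suc i}" using inj by (rule inj_on_subset) (auto simp: Lv_iff)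
  have "card {p\<in>P. R p = Suc i} = 3" using card_image[OF injB] eqB by simp
  then show "card {p\<in>P. rank P le p = Suc i} = 3" unfolding R_def .
  have key: "\<And>x y. x \<in> P \<Longrightarrow> R x = i \<Longrightarrow> y \<in> P \<Longrightarrow> R y = Suc i \<Longrightarrow> (\<not> le x y \<longleftrightarrow> h y = 3 + (h x + 1) mod 3)"
  proof -
    fix x y assume "x \<in> P" "R x = i" "y \<in> P" "R y = Suc i"
    then have xL: "x \<in> Lv" and yL: "y \<in> Lv" and "h x < 3" "3 \<le> h y" using Lv_iff low up by auto
    then show "\<not> le x y \<longleftrightarrow> h y = 3 + (h x + 1) mod 3"
      using ordh crown_fact[of "h x" "h y"] hle5[OF yL] by blast
  qed
  show "\<And>x. x \<in> P \<Longrightarrow> rank P le x = i \<Longrightarrow> \<exists>y\<in>P. rank P le y = Suc i \<and> \<not> le x y"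
  proof -
    fix x assume x: "x \<in> P" "rank P le x = i"
    have m: "(h x + 1) mod 3 < 3" by simp
    have "3 \<le> 3 + (h x + 1) mod 3" "3 + (h x + 1) mod 3 \<le> 5" using m by linarith+
    then obtain y where "y \<in> P" "R y = Suc i" "h y = 3 + (h x + 1) mod 3" using img_up by blast
    then show "\<exists>y\<in>P. rank P le y = Suc i \<and> \<not> le x y" using key x unfolding R_def by blast
  qed
  show "\<And>x y y'. x \<in> P \<Longrightarrow> rank P le x = i \<Longrightarrow> y \<in> P \<Longrightarrow> y' \<in> P \<Longrightarrow> rank P le y = Suc i
          \<Longrightarrow> rank P le y' = Suc i \<Longrightarrow> \<not> le x y \<Longrightarrow> \<not> le x y' \<Longrightarrow> y = y'"
  proof -
    fix x y y' assume a: "x \<in> P" "rank P le x = i" "y \<in> P" "y' \<in> P" "rank P le y = Suc i"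
          "rank P le y' = Suc i" "\<not> le x y" "\<not> le x y'"
    then have "h y = h y'" using key[of x y] key[of x y'] unfolding R_def by simp
    moreover have "y \<in> Lv" "y' \<in> Lv" using a Lv_iff unfolding R_def by auto
    ultimately show "y = y'" using inj by (metis inj_onD)
  qed
  show "\<And>y. y \<in> P \<Longrightarrow> rank P le y = Suc i \<Longrightarrow> \<exists>x\<in>P. rank P le x = i \<and> \<not> le x y"
  proof -
    fix y assume y: "y \<in> P" "rank P le y = Suc i"
    then have "3 \<le> h y" "h y \<le> 5" using up hle5 Lv_iff unfolding R_def by auto
    then obtain x where x: "x \<in> P" "R x = i" "h x = (h y - 3 + 2) mod 3" using img_low[of "(h y - 3 + 2) mod 3"] by auto
    have "h y = 3 + (h x + 1) mod 3" using x(3) mod3_pre[OF \<open>3 \<le> h y\<close> \<open>h y \<le> 5\<close>] by simp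
    then show "\<exists>x\<in>P. rank P le x = i \<and> \<not> le x y" using key x y unfolding R_def by blast
  qed
  show "\<And>y x x'. y \<in> P \<Longrightarrow> rank P le y = Suc i \<Longrightarrow> x \<in> P \<Longrightarrow> x' \<in> P \<Longrightarrow> rank P le x = i
          \<Longrightarrow> rank P le x' = i \<Longrightarrow> \<not> le x y \<Longrightarrow> \<not> le x' y \<Longrightarrow> x = x'"
  proof -
    fix y x x' assume a: "y \<in> P" "rank P le y = Suc i" "x \<in> P" "x' \<in> P" "rank P le x = i"
          "rank P le x' = i" "\<not> le x y" "\<not> le x' y"
    then have "3 + (h x + 1) mod 3 = 3 + (h x' + 1) mod 3" using key[of x y] key[of x' y] unfolding R_def by simp
    then have "h x = h x'" using mod3_inj[of "h x" "h x'"] low[of x] low[of x'] a unfolding R_def by simp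
    moreover have "x \<in> Lv" "x' \<in> Lv" using a Lv_iff unfolding R_def by auto
    ultimately show "x = x'" using inj by (metis inj_onD)
  qed
qed


lemma two_good:
  assumes "card A = 3" "\<And>a b. a \<in> A \<Longrightarrow> b \<in> A \<Longrightarrow> \<not> \<Phi> a \<Longrightarrow> \<not> \<Phi> b \<Longrightarrow> a = b"
  shows "\<exists>y1\<in>A. \<exists>y2\<in>A. y1 \<noteq> y2 \<and> \<Phi> y1 \<and> \<Phi> y2"
proof -
  obtain x y z where A: "A = {x,y,z}" "x \<noteq> y" "y \<noteq> z" "x \<noteq> z" using card_3_iff[THEN iffD1, OF assms(1)] by blast
  have xyz: "x \<in> A" "y \<in> A" "z \<in> A" using A by auto
  have u: "\<not> \<Phi> a \<Longrightarrow> \<not> \<Phi> b \<Longrightarrow> a = b" if "a \<in> A" "b \<in> A" for a b using assms(2) that by blast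
  show ?thesis
  proof (cases "\<Phi> x")
    case True
    show ?thesis
    proof (cases "\<Phi> y")
      case True then show ?thesis using \<open>\<Phi> x\<close> xyz A by blast
    next
      case False
      then have "\<Phi> z" using u[OF xyz(2) xyz(3)] A by blast
      then show ?thesis using \<open>\<Phi> x\<close> xyz A by blast
    qed
  next
    case False
    then have "\<Phi> y" "\<Phi> z" using u[OF xyz(1) xyz(2)] u[OF xyz(1) xyz(3)] A by blast+
    then show ?thesis using xyz A by blast
  qed
qed

lemma one_good2:
  assumes "card A = 3" "\<And>a b. a \<in> A \<Longrightarrow> b \<in> A \<Longrightarrow> \<not> \<Phi> a \<Longrightarrow> \<not> \<Phi> b \<Longrightarrow> a = b"
    "\<And>a b. a \<in> A \<Longrightarrow> b \<in> A \<Longrightarrow> \<not> \<Psi> a \<Longrightarrow> \<not> \<Psi> b \<Longrightarrow> a = b"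
  shows "\<exists>a\<in>A. \<Phi> a \<and> \<Psi> a"
proof -
  obtain x y z where A: "A = {x,y,z}" "x \<noteq> y" "y \<noteq> z" "x \<noteq> z" using card_3_iff[THEN iffD1, OF assms(1)] by blast
  have xyz: "x \<in> A" "y \<in> A" "z \<in> A" using A by auto
  have u: "\<not> \<Phi> a \<Longrightarrow> \<not> \<Phi> b \<Longrightarrow> a = b" if "a \<in> A" "b \<in> A" for a b using assms(2) that by blast
  have v: "\<not> \<Psi> a \<Longrightarrow> \<not> \<Psi> b \<Longrightarrow> a = b" if "a \<in> A" "b \<in> A" for a b using assms(3) that by blast
  have "(\<Phi> x \<and> \<Psi> x) \<or> (\<Phi> y \<and> \<Psi> y) \<or> (\<Phi> z \<and> \<Psi> z)"
    using u[OF xyz(1) xyz(2)] u[OF xyz(1) xyz(3)] u[OF xyz(2) xyz(3)]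
      v[OF xyz(1) xyz(2)] v[OF xyz(1) xyz(3)] v[OF xyz(2) xyz(3)] A by blast
  then show ?thesis using xyz by blast
qed

definition stk :: "'a set \<Rightarrow> ('a \<Rightarrow> 'a \<Rightarrow> bool) \<Rightarrow> ('a \<Rightarrow> nat) \<Rightarrow> nat \<Rightarrow> bool" where
"stk P le lev N \<longleftrightarrow> poset_on P le \<and> (\<forall>x\<in>P. lev x \<le> N) \<and> (\<forall>i\<le>N. card {p\<in>P. lev p = i} = 3) \<and>
 (\<forall>x\<in>P. \<forall>y\<in>P. le x y \<and> x \<noteq> y \<longrightarrow> lev x < lev y) \<and>
 (\<forall>x\<in>P. \<forall>y\<in>P. lev x + 2 \<le> lev y \<longrightarrow> le x y) \<and>
 (\<forall>x\<in>P. lev x < N \<longrightarrow> (\<exists>y\<in>P. lev y = Suc (lev x) \<and> \<not> le x y)) \<and>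
 (\<forall>x\<in>P. \<forall>y\<in>P. \<forall>y'\<in>P. lev x < N \<longrightarrow> lev y = Suc (lev x) \<longrightarrow> lev y' = Suc (lev x) \<longrightarrow> \<not> le x y \<longrightarrow> \<not> le x y' \<longrightarrow> y = y') \<and>
 (\<forall>y\<in>P. 0 < lev y \<longrightarrow> (\<exists>x\<in>P. Suc (lev x) = lev y \<and> \<not> le x y)) \<and>
 (\<forall>y\<in>P. \<forall>x\<in>P. \<forall>x'\<in>P. 0 < lev y \<longrightarrow> Suc (lev x) = lev y \<longrightarrow> Suc (lev x') = lev y \<longrightarrow> \<not> le x y \<longrightarrow> \<not> le x' y \<longrightarrow> x = x')"

lemma stkD:
  assumes "stk P le lev N"
  shows stk_po: "poset_on P le" and stk_bnd: "\<forall>x\<in>P. lev x \<le> N"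
    and stk_c3: "\<forall>i\<le>N. card {p\<in>P. lev p = i} = 3"
    and stk_mono: "\<forall>x\<in>P. \<forall>y\<in>P. le x y \<and> x \<noteq> y \<longrightarrow> lev x < lev y"
    and stk_C2: "\<forall>x\<in>P. \<forall>y\<in>P. lev x + 2 \<le> lev y \<longrightarrow> le x y"
    and stk_M1e: "\<forall>x\<in>P. lev x < N \<longrightarrow> (\<exists>y\<in>P. lev y = Suc (lev x) \<and> \<not> le x y)"
    and stk_M1u: "\<forall>x\<in>P. \<forall>y\<in>P. \<forall>y'\<in>P. lev x < N \<longrightarrow> lev y = Suc (lev x) \<longrightarrow> lev y' = Suc (lev x) \<longrightarrow> \<not> le x y \<longrightarrow> \<not> le x y' \<longrightarrow> y = y'"
    and stk_M2e: "\<forall>y\<in>P. 0 < lev y \<longrightarrow> (\<exists>x\<in>P. Suc (lev x) = lev y \<and> \<not> le x y)"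
    and stk_M2u: "\<forall>y\<in>P. \<forall>x\<in>P. \<forall>x'\<in>P. 0 < lev y \<longrightarrow> Suc (lev x) = lev y \<longrightarrow> Suc (lev x') = lev y \<longrightarrow> \<not> le x y \<longrightarrow> \<not> le x' y \<longrightarrow> x = x'"
  using assms unfolding stk_def by simp_all

lemma six_stack_stk:
  assumes "six_stack P le"
  shows "\<exists>N. stk P le (rank P le) N"
proof -
  obtain n where n: "n \<ge> 1" "ranked_of_rank P le n"
    "\<forall>i<n. order_iso (levels P le i (Suc i)) le crown6 crown6_le"
    using assms unfolding six_stack_def by blast
  define R where "R = rank P le"
  have po: "poset_on P le" using n(2) unfolding ranked_of_rank_def by blast
  have refl: "\<And>x. x \<in> P \<Longrightarrow> le x x" using po unfolding poset_on_def by blast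
  have trans: "\<And>x y z. x \<in> P \<Longrightarrow> y \<in> P \<Longrightarrow> z \<in> P \<Longrightarrow> le x y \<Longrightarrow> le y z \<Longrightarrow> le x z"
    using po unfolding poset_on_def by blast
  have bnd: "\<forall>x\<in>P. R x \<le> n" using rank_le_n[OF n(2)] unfolding R_def by blast
  have card3: "\<forall>i\<le>n. card {p\<in>P. R p = i} = 3"
  proof (intro allI impI)
    fix i assume i: "i \<le> n"
    show "card {p\<in>P. R p = i} = 3"
    proof (cases "i < n")
      case True then show ?thesis using crown_levels(1)[OF po] n(3) unfolding R_def by blast
    next
      case False
      then have "i = Suc (n - 1)" "n - 1 < n" using i n(1) by auto
      then show ?thesis using crown_levels(2)[OF po, of "n - 1"] n(3) unfolding R_def by metis
    qed
  qed
  have mono: "\<forall>x\<in>P. \<forall>y\<in>P. le x y \<and> x \<noteq> y \<longrightarrow> R x < R y" using rank_lt[OF po] unfolding R_def by blast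
  have M1e: "\<forall>x\<in>P. R x < n \<longrightarrow> (\<exists>y\<in>P. R y = Suc (R x) \<and> \<not> le x y)"
    using crown_levels(3)[OF po] n(3) unfolding R_def by blast
  have M1u: "\<forall>x\<in>P. \<forall>y\<in>P. \<forall>y'\<in>P. R x < n \<longrightarrow> R y = Suc (R x) \<longrightarrow> R y' = Suc (R x) \<longrightarrow> \<not> le x y \<longrightarrow> \<not> le x y' \<longrightarrow> y = y'"
    using crown_levels(4)[OF po] n(3) unfolding R_def by blast
  have M2e: "\<forall>y\<in>P. 0 < R y \<longrightarrow> (\<exists>x\<in>P. Suc (R x) = R y \<and> \<not> le x y)"
  proof (intro ballI impI)
    fix y assume y: "y \<in> P" "0 < R y"
    then have "R y = Suc (R y - 1)" "R y - 1 < n" using bnd by auto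
    then show "\<exists>x\<in>P. Suc (R x) = R y \<and> \<not> le x y"
      using crown_levels(5)[OF po n(3)[rule_format, of "R y - 1"] y(1)] unfolding R_def by metis
  qed
  have M2u: "\<forall>y\<in>P. \<forall>x\<in>P. \<forall>x'\<in>P. 0 < R y \<longrightarrow> Suc (R x) = R y \<longrightarrow> Suc (R x') = R y \<longrightarrow> \<not> le x y \<longrightarrow> \<not> le x' y \<longrightarrow> x = x'"
  proof (intro ballI impI)
    fix y x x' assume y: "y \<in> P" "x \<in> P" "x' \<in> P" "0 < R y" "Suc (R x) = R y" "Suc (R x') = R y" "\<not> le x y" "\<not> le x' y"
    then have "R y - 1 < n" using bnd by auto
    then show "x = x'"
      using crown_levels(6)[OF po n(3)[rule_format, of "R y - 1"] y(1) _ y(2,3)] y unfolding R_def by auto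
  qed
  have C2: "\<And>d. \<forall>x\<in>P. \<forall>y\<in>P. R y = R x + 2 + d \<longrightarrow> le x y"
  proof -
    fix d show "\<forall>x\<in>P. \<forall>y\<in>P. R y = R x + 2 + d \<longrightarrow> le x y"
    proof (induction d)
      case 0
      show ?case
      proof (intro ballI impI)
        fix x y assume xy: "x \<in> P" "y \<in> P" "R y = R x + 2 + 0"
        have c: "card {p\<in>P. R p = Suc (R x)} = 3" using card3 bnd xy by auto
        obtain y1 y2 where yy: "y1 \<in> P" "y2 \<in> P" "R y1 = Suc (R x)" "R y2 = Suc (R x)" "y1 \<noteq> y2" "le y1 y" "le y2 y"
        proof -
          have "\<exists>y1\<in>{p\<in>P. R p = Suc (R x)}. \<exists>y2\<in>{p\<in>P. R p = Suc (R x)}. y1 \<noteq> y2 \<and> le y1 y \<and> le y2 y"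
          proof (rule two_good[OF c])
            fix a b assume "a \<in> {p\<in>P. R p = Suc (R x)}" "b \<in> {p\<in>P. R p = Suc (R x)}" "\<not> le a y" "\<not> le b y"
            then show "a = b" using M2u xy by auto
          qed
          then show ?thesis using that by blast
        qed
        have "R x < n" using bnd xy by fastforce
        then have "le x y1 \<or> le x y2" using M1u xy yy by blast
        then show "le x y" using trans xy yy by blast
      qed
    next
      case (Suc d)
      show ?case
      proof (intro ballI impI)
        fix x y assume xy: "x \<in> P" "y \<in> P" "R y = R x + 2 + Suc d"
        obtain z where z: "z \<in> P" "le z y" "R z = R x + 2 + d"
          using rank_pred[OF po xy(2), of "R x + 2 + d"] xy(3) unfolding R_def by auto
        then show "le x y" using Suc.IH xy trans by blast
      qed
    qed
  qed
  have C2': "\<forall>x\<in>P. \<forall>y\<in>P. R x + 2 \<le> R y \<longrightarrow> le x y"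
  proof (intro ballI impI)
    fix x y assume "x \<in> P" "y \<in> P" "R x + 2 \<le> R y"
    then show "le x y" using C2[of "R y - (R x + 2)"] by auto
  qed
  have "stk P le R n" unfolding stk_def
    using po bnd card3 mono C2' M1e M1u M2e M2u by blast
  then show ?thesis unfolding R_def by blast
qed


lemma stk_dual:
  assumes "stk P le lev N"
  shows "stk P (\<lambda>x y. le y x) (\<lambda>x. N - lev x) N"
proof -
  note S = assms[unfolded stk_def]
  have po: "poset_on P le" and bnd: "\<forall>x\<in>P. lev x \<le> N" and c3: "\<forall>i\<le>N. card {p\<in>P. lev p = i} = 3"
    and mono: "\<forall>x\<in>P. \<forall>y\<in>P. le x y \<and> x \<noteq> y \<longrightarrow> lev x < lev y"
    and C2: "\<forall>x\<in>P. \<forall>y\<in>P. lev x + 2 \<le> lev y \<longrightarrow> le x y"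
    and M1e: "\<forall>x\<in>P. lev x < N \<longrightarrow> (\<exists>y\<in>P. lev y = Suc (lev x) \<and> \<not> le x y)"
    and M1u: "\<forall>x\<in>P. \<forall>y\<in>P. \<forall>y'\<in>P. lev x < N \<longrightarrow> lev y = Suc (lev x) \<longrightarrow> lev y' = Suc (lev x) \<longrightarrow> \<not> le x y \<longrightarrow> \<not> le x y' \<longrightarrow> y = y'"
    and M2e: "\<forall>y\<in>P. 0 < lev y \<longrightarrow> (\<exists>x\<in>P. Suc (lev x) = lev y \<and> \<not> le x y)"
    and M2u: "\<forall>y\<in>P. \<forall>x\<in>P. \<forall>x'\<in>P. 0 < lev y \<longrightarrow> Suc (lev x) = lev y \<longrightarrow> Suc (lev x') = lev y \<longrightarrow> \<not> le x y \<longrightarrow> \<not> le x' y \<longrightarrow> x = x'"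
    using S by simp_all
  have po': "poset_on P (\<lambda>x y. le y x)" using po unfolding poset_on_def by blast
  have bnd': "\<forall>x\<in>P. N - lev x \<le> N" by simp
  have c3': "\<forall>i\<le>N. card {p\<in>P. N - lev p = i} = 3"
  proof (intro allI impI)
    fix i assume i: "i \<le> N"
    have "{p\<in>P. N - lev p = i} = {p\<in>P. lev p = N - i}" using bnd i by auto
    then show "card {p\<in>P. N - lev p = i} = 3" using c3 by simp
  qed
  have mono': "\<forall>x\<in>P. \<forall>y\<in>P. le y x \<and> x \<noteq> y \<longrightarrow> N - lev x < N - lev y"
  proof (intro ballI impI)
    fix x y assume a: "x \<in> P" "y \<in> P" "le y x \<and> x \<noteq> y"
    then have "lev y < lev x" using mono by blast
    moreover have "lev x \<le> N" using bnd a by blast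
    ultimately show "N - lev x < N - lev y" by linarith
  qed
  have C2': "\<forall>x\<in>P. \<forall>y\<in>P. N - lev x + 2 \<le> N - lev y \<longrightarrow> le y x"
  proof (intro ballI impI)
    fix x y assume "x \<in> P" "y \<in> P" "N - lev x + 2 \<le> N - lev y"
    moreover have "lev x \<le> N" "lev y \<le> N" using bnd \<open>x \<in> P\<close> \<open>y \<in> P\<close> by auto
    ultimately have "lev y + 2 \<le> lev x" by linarith
    then show "le y x" using C2 \<open>x \<in> P\<close> \<open>y \<in> P\<close> by blast
  qed
  have M1e': "\<forall>x\<in>P. N - lev x < N \<longrightarrow> (\<exists>y\<in>P. N - lev y = Suc (N - lev x) \<and> \<not> le y x)"
  proof (intro ballI impI)
    fix x assume x: "x \<in> P" "N - lev x < N"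
    then obtain y where y: "y \<in> P" "Suc (lev y) = lev x" "\<not> le y x" using M2e by force
    then show "\<exists>y\<in>P. N - lev y = Suc (N - lev x) \<and> \<not> le y x" using bnd x by (intro bexI[of _ y]) auto
  qed
  have M1u': "\<forall>x\<in>P. \<forall>y\<in>P. \<forall>y'\<in>P. N - lev x < N \<longrightarrow> N - lev y = Suc (N - lev x) \<longrightarrow> N - lev y' = Suc (N - lev x) \<longrightarrow> \<not> le y x \<longrightarrow> \<not> le y' x \<longrightarrow> y = y'"
  proof (intro ballI impI)
    fix x y y' assume a: "x \<in> P" "y \<in> P" "y' \<in> P" "N - lev x < N" "N - lev y = Suc (N - lev x)"
      "N - lev y' = Suc (N - lev x)" "\<not> le y x" "\<not> le y' x"
    then have "0 < lev x" "Suc (lev y) = lev x" "Suc (lev y') = lev x" using bnd by fastforce+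
    then show "y = y'" using M2u a by blast
  qed
  have M2e': "\<forall>y\<in>P. 0 < N - lev y \<longrightarrow> (\<exists>x\<in>P. Suc (N - lev x) = N - lev y \<and> \<not> le y x)"
  proof (intro ballI impI)
    fix y assume y: "y \<in> P" "0 < N - lev y"
    then obtain x where x: "x \<in> P" "lev x = Suc (lev y)" "\<not> le y x" using M1e by force
    then show "\<exists>x\<in>P. Suc (N - lev x) = N - lev y \<and> \<not> le y x" using bnd y by (intro bexI[of _ x]) auto
  qed
  have M2u': "\<forall>y\<in>P. \<forall>x\<in>P. \<forall>x'\<in>P. 0 < N - lev y \<longrightarrow> Suc (N - lev x) = N - lev y \<longrightarrow> Suc (N - lev x') = N - lev y \<longrightarrow> \<not> le y x \<longrightarrow> \<not> le y x' \<longrightarrow> x = x'"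
  proof (intro ballI impI)
    fix y x x' assume a: "y \<in> P" "x \<in> P" "x' \<in> P" "0 < N - lev y" "Suc (N - lev x) = N - lev y"
      "Suc (N - lev x') = N - lev y" "\<not> le y x" "\<not> le y x'"
    then have "lev y < N" "lev x = Suc (lev y)" "lev x' = Suc (lev y)" using bnd by fastforce+
    then show "x = x'" using M1u a by blast
  qed
  show ?thesis unfolding stk_def using po' bnd' c3' mono' C2' M1e' M1u' M2e' M2u' by blast
qed


lemma anti3_aux:
  assumes st: "stk P le lev N" and P: "x \<in> P" "y \<in> P" "z \<in> P"
    and d: "x \<noteq> y" "y \<noteq> z" "x \<noteq> z"
    and inc: "\<not> le x y" "\<not> le y x" "\<not> le x z" "\<not> le z x" "\<not> le y z" "\<not> le z y"
    and lt: "lev x < lev y"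
  shows False
proof -
  note S = st[unfolded stk_def]
  have bnd: "\<forall>x\<in>P. lev x \<le> N"
    and C2: "\<forall>x\<in>P. \<forall>y\<in>P. lev x + 2 \<le> lev y \<longrightarrow> le x y"
    and M1u: "\<forall>x\<in>P. \<forall>y\<in>P. \<forall>y'\<in>P. lev x < N \<longrightarrow> lev y = Suc (lev x) \<longrightarrow> lev y' = Suc (lev x) \<longrightarrow> \<not> le x y \<longrightarrow> \<not> le x y' \<longrightarrow> y = y'"
    and M2u: "\<forall>y\<in>P. \<forall>x\<in>P. \<forall>x'\<in>P. 0 < lev y \<longrightarrow> Suc (lev x) = lev y \<longrightarrow> Suc (lev x') = lev y \<longrightarrow> \<not> le x y \<longrightarrow> \<not> le x' y \<longrightarrow> x = x'"
    using S by simp_all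
  have y1: "lev y = Suc (lev x)"
  proof (rule ccontr)
    assume "lev y \<noteq> Suc (lev x)"
    then have "lev x + 2 \<le> lev y" using lt by linarith
    then have "le x y" by (rule C2[rule_format, OF P(1) P(2)])
    then show False using inc(1) by simp
  qed
  have xN: "lev x < N" using bnd[rule_format, OF P(2)] y1 by simp
  have "lev z = lev x \<or> lev z = Suc (lev x) \<or> lev z + 2 \<le> lev y \<or> lev x + 2 \<le> lev z"
    using y1 by linarith
  then consider "lev z = lev x" | "lev z = Suc (lev x)" | "lev z + 2 \<le> lev y" | "lev x + 2 \<le> lev z"
    by blast
  then show False
  proof cases
    case 1
    have h: "0 < lev y" "Suc (lev x) = lev y" "Suc (lev z) = lev y" using y1 1 by simp_all
    have "x = z" by (rule M2u[rule_format, OF P(2) P(1) P(3) h inc(1) inc(6)])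
    then show ?thesis using d by simp
  next
    case 2
    have h: "lev y = Suc (lev x)" "lev z = Suc (lev x)" using y1 2 by simp_all
    have "y = z" by (rule M1u[rule_format, OF P(1) P(2) P(3) xN h inc(1) inc(3)])
    then show ?thesis using d by simp
  next
    case 3 then show ?thesis using C2[rule_format, OF P(3) P(2)] inc(6) by simp
  next
    case 4 then show ?thesis using C2[rule_format, OF P(1) P(3)] inc(3) by simp
  qed
qed

lemma anti3:
  assumes st: "stk P le lev N" and P: "x \<in> P" "y \<in> P" "z \<in> P"
    and d: "x \<noteq> y" "y \<noteq> z" "x \<noteq> z"
    and inc: "\<not> le x y" "\<not> le y x" "\<not> le x z" "\<not> le z x" "\<not> le y z" "\<not> le z y"
  shows "lev y = lev x" "lev z = lev x" "{p\<in>P. lev p = lev x} = {x,y,z}"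
proof -
  have n1: "\<not> lev x < lev y" using anti3_aux[OF st P d inc] by blast
  have n2: "\<not> lev y < lev x" using anti3_aux[OF st P(2,1,3) d(1)[symmetric] d(3) d(2) inc(2,1,5,6,3,4)] by blast
  have n3: "\<not> lev x < lev z" using anti3_aux[OF st P(1,3,2) d(3) d(2)[symmetric] d(1) inc(3,4,1,2,6,5)] by blast
  have n4: "\<not> lev z < lev x" using anti3_aux[OF st P(3,1,2) d(3)[symmetric] d(1) d(2)[symmetric] inc(4,3,6,5,1,2)] by blast
  show 1: "lev y = lev x" using n1 n2 by linarith
  show 2: "lev z = lev x" using n3 n4 by linarith
  have fin: "finite P" using stk_po[OF st] unfolding poset_on_def by blast
  have bnd: "lev x \<le> N" using stk_bnd[OF st] P(1) by blast
  have c: "card {p\<in>P. lev p = lev x} = 3" using stk_c3[OF st] bnd by blast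
  have sub: "{x,y,z} \<subseteq> {p\<in>P. lev p = lev x}" using 1 2 P by blast
  have c3: "card {x,y,z} = 3" using d by simp
  have finL: "finite {p\<in>P. lev p = lev x}" using fin by simp
  have "{x,y,z} = {p\<in>P. lev p = lev x}" using card_subset_eq[OF finL sub] c c3 by simp
  then show "{p\<in>P. lev p = lev x} = {x,y,z}" by simp
qed

lemma top_case:
  assumes st: "stk P le lev N" and QP: "Q \<subseteq> P"
    and f1: "\<forall>x\<in>P. f x \<in> Q" and f2: "\<forall>x\<in>P. \<forall>y\<in>P. le x y \<longrightarrow> le (f x) (f y)" and f3: "\<forall>q\<in>Q. f q = q"
    and bN: "b < N"
    and Lb: "\<forall>p\<in>P. lev p = b \<longrightarrow> p \<in> Q"
    and H2: "\<forall>q\<in>Q. b < lev q \<longrightarrow> (\<forall>y\<in>P. lev y = b \<longrightarrow> le y q)"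
    and H3: "\<forall>q\<in>Q. b < lev q \<longrightarrow> (\<exists>q'\<in>Q. b < lev q' \<and> \<not> le q q' \<and> \<not> le q' q)"
  shows False
proof -
  note S = st[unfolded stk_def]
  have po: "poset_on P le" and bnd: "\<forall>x\<in>P. lev x \<le> N" and c3: "\<forall>i\<le>N. card {p\<in>P. lev p = i} = 3"
    and mono: "\<forall>x\<in>P. \<forall>y\<in>P. le x y \<and> x \<noteq> y \<longrightarrow> lev x < lev y"
    and C2: "\<forall>x\<in>P. \<forall>y\<in>P. lev x + 2 \<le> lev y \<longrightarrow> le x y"
    and M2e: "\<forall>y\<in>P. 0 < lev y \<longrightarrow> (\<exists>x\<in>P. Suc (lev x) = lev y \<and> \<not> le x y)"
    and M2u: "\<forall>y\<in>P. \<forall>x\<in>P. \<forall>x'\<in>P. 0 < lev y \<longrightarrow> Suc (lev x) = lev y \<longrightarrow> Suc (lev x') = lev y \<longrightarrow> \<not> le x y \<longrightarrow> \<not> le x' y \<longrightarrow> x = x'"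
    using S by simp_all
  have fin: "finite P" and refl: "\<And>x. x \<in> P \<Longrightarrow> le x x"
    and trans: "\<And>x y z. x \<in> P \<Longrightarrow> y \<in> P \<Longrightarrow> z \<in> P \<Longrightarrow> le x y \<Longrightarrow> le y z \<Longrightarrow> le x z"
    using po unfolding poset_on_def by blast+
  define L where "L = (\<lambda>i. {p\<in>P. lev p = i})"
  have cb: "card (L b) = 3" and cb1: "card (L (Suc b)) = 3" using c3 bN unfolding L_def by auto
  have two_below: "\<And>w. w \<in> P \<Longrightarrow> lev w = Suc b \<Longrightarrow> \<exists>y1\<in>L b. \<exists>y2\<in>L b. y1 \<noteq> y2 \<and> le y1 w \<and> le y2 w"
  proof -
    fix w assume w: "w \<in> P" "lev w = Suc b"
    show "\<exists>y1\<in>L b. \<exists>y2\<in>L b. y1 \<noteq> y2 \<and> le y1 w \<and> le y2 w"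
    proof (rule two_good[OF cb])
      fix a c assume "a \<in> L b" "c \<in> L b" "\<not> le a w" "\<not> le c w"
      then show "a = c" using M2u[rule_format, OF w(1), of a c] w unfolding L_def by simp
    qed
  qed
  have above_two: "\<And>v y1 y2. v \<in> P \<Longrightarrow> y1 \<in> L b \<Longrightarrow> y2 \<in> L b \<Longrightarrow> y1 \<noteq> y2 \<Longrightarrow> le y1 v \<Longrightarrow> le y2 v \<Longrightarrow> b < lev v"
  proof -
    fix v y1 y2 assume a: "v \<in> P" "y1 \<in> L b" "y2 \<in> L b" "y1 \<noteq> y2" "le y1 v" "le y2 v"
    show "b < lev v"
    proof (cases "v = y1")
      case True
      have y12: "y1 \<in> P" "y2 \<in> P" "lev y1 = b" "lev y2 = b" using a(2,3) unfolding L_def by auto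
      have "le y2 y1" using a(6) True by simp
      then have "lev y2 < lev y1" using mono[rule_format, OF y12(2) y12(1)] a(4) by blast
      then show ?thesis using y12 by simp
    next
      case False
      then show ?thesis using mono a unfolding L_def by auto
    qed
  qed
  have noB1: "\<And>q. q \<in> Q \<Longrightarrow> lev q \<noteq> Suc b"
  proof
    fix q assume q: "q \<in> Q" "lev q = Suc b"
    then have qP: "q \<in> P" using QP by blast
    obtain x where x: "x \<in> P" "Suc (lev x) = lev q" "\<not> le x q" using M2e qP q by force
    have "le x q" using H2 q x by auto
    then show False using x by simp
  qed
  have "L (Suc b) \<noteq> {}" using cb1 by auto
  then obtain w0 where w0: "w0 \<in> P" "lev w0 = Suc b" unfolding L_def by blast
  obtain y1 y2 where yy: "y1 \<in> L b" "y2 \<in> L b" "y1 \<noteq> y2" "le y1 w0" "le y2 w0" using two_below[OF w0] by blast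
  have yQ: "y1 \<in> Q" "y2 \<in> Q" using yy Lb unfolding L_def by auto
  have fw0: "f w0 \<in> Q" using f1 w0 by blast
  have "le y1 (f w0)" "le y2 (f w0)" using f2 f3 yQ yy w0 unfolding L_def by (metis (mono_tags, lifting) mem_Collect_eq)+
  then have "b < lev (f w0)" using above_two[OF _ yy(1,2,3)] fw0 QP by blast
  define T where "T = {q\<in>Q. b < lev q}"
  have Tne: "T \<noteq> {}" using fw0 \<open>b < lev (f w0)\<close> unfolding T_def by blast
  have Tfin: "finite T" using fin QP unfolding T_def by (metis (no_types, lifting) finite_subset mem_Collect_eq subsetI)
  define c where "c = Min (lev ` T)"
  have "c \<in> lev ` T" unfolding c_def using Tne Tfin by (intro Min_in) auto
  then obtain u where u: "u \<in> T" "lev u = c" by blast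
  have cmin: "\<And>q. q \<in> T \<Longrightarrow> c \<le> lev q" unfolding c_def using Tfin by (intro Min_le) auto
  have uQ: "u \<in> Q" "b < lev u" using u unfolding T_def by auto
  obtain u' where u': "u' \<in> Q" "b < lev u'" "\<not> le u u'" "\<not> le u' u" using H3 uQ by blast
  have uP: "u \<in> P" "u' \<in> P" using uQ u' QP by auto
  have u2: "Suc (Suc b) \<le> lev u" "Suc (Suc b) \<le> lev u'" using noB1 uQ u' by (metis Suc_leI le_neq_implies_less)+
  have atmost1: "\<And>v a a'. v \<in> P \<Longrightarrow> Suc (Suc b) \<le> lev v \<Longrightarrow> a \<in> L (Suc b) \<Longrightarrow> a' \<in> L (Suc b) \<Longrightarrow> \<not> le a v \<Longrightarrow> \<not> le a' v \<Longrightarrow> a = a'"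
  proof -
    fix v a a' assume a: "v \<in> P" "Suc (Suc b) \<le> lev v" "a \<in> L (Suc b)" "a' \<in> L (Suc b)" "\<not> le a v" "\<not> le a' v"
    show "a = a'"
    proof (cases "lev v = Suc (Suc b)")
      case True
      then show ?thesis using M2u[rule_format, OF a(1), of a a'] a unfolding L_def by simp
    next
      case False
      then have "lev a + 2 \<le> lev v" using a unfolding L_def by simp
      then have "le a v" using C2 a unfolding L_def by blast
      then show ?thesis using a by simp
    qed
  qed
  obtain w where w: "w \<in> L (Suc b)" "le w u" "le w u'"
    using one_good2[OF cb1, of "\<lambda>a. le a u" "\<lambda>a. le a u'"] atmost1[OF uP(1) u2(1)] atmost1[OF uP(2) u2(2)] by blast
  have wP: "w \<in> P" "lev w = Suc b" using w unfolding L_def by auto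
  obtain z1 z2 where zz: "z1 \<in> L b" "z2 \<in> L b" "z1 \<noteq> z2" "le z1 w" "le z2 w" using two_below[OF wP] by blast
  have zQ: "z1 \<in> Q" "z2 \<in> Q" using zz Lb unfolding L_def by auto
  have zP: "z1 \<in> P" "z2 \<in> P" using zz unfolding L_def by auto
  have fw: "f w \<in> Q" using f1 wP by blast
  have "le (f z1) (f w)" "le (f z2) (f w)" using f2 zP wP zz by blast+
  then have "le z1 (f w)" "le z2 (f w)" using f3 zQ by auto
  then have "b < lev (f w)" using above_two[OF _ zz(1,2,3)] fw QP by blast
  then have "f w \<in> T" using fw unfolding T_def by blast
  then have cle: "c \<le> lev (f w)" by (rule cmin)
  have "le (f w) (f u)" "le (f w) (f u')" using f2 wP uP w by blast+
  then have fu: "le (f w) u" "le (f w) u'" using f3 uQ u' by auto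
  have "f w = u"
  proof (rule ccontr)
    assume "f w \<noteq> u"
    then have "lev (f w) < lev u" using mono fu fw QP uP by blast
    then show False using cle u by simp
  qed
  then show False using fu u' by simp
qed

lemma block_partner:
  assumes sec: "is_section B le" and q: "q \<in> B"
  shows "\<exists>q'\<in>B. \<not> le q q' \<and> \<not> le q' q"
  using sec unfolding is_section_def
proof (elim disjE exE conjE)
  assume ta: "two_antichain B le"
  then have "card B = 2" unfolding two_antichain_def by blast
  then obtain x y where B: "B = {x,y}" "x \<noteq> y" using card_2_iff[THEN iffD1] by metis
  obtain q' where q': "q' \<in> B" "q' \<noteq> q"
  proof (cases "q = x")
    case True then show ?thesis using that B by blast
  next
    case False then show ?thesis using that B by blast
  qed
  have "\<not> le q q'" "\<not> le q' q" using ta q q' unfolding two_antichain_def by blast+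
  then show ?thesis using q' by blast
next
  fix n R assume sp: "section_poset n R" and iso: "order_iso B le (section_carrier n) R"
  obtain g where bij: "bij_betw g B (section_carrier n)" and og: "\<forall>x\<in>B. \<forall>y\<in>B. le x y \<longleftrightarrow> R (g x) (g y)"
    using iso unfolding order_iso_def by blast
  have img: "g ` B = section_carrier n" using bij unfolding bij_betw_def by simp
  obtain c k where ck: "g q = (c,k)" by (cases "g q") auto
  have "g q \<in> section_carrier n" using img q by blast
  then have ck2: "c \<le> 2" "k \<le> n" using ck unfolding section_carrier_def by auto
  have t: "((c+1) mod 3, k) \<in> section_carrier n" using ck2 unfolding section_carrier_def by auto
  then have "((c+1) mod 3, k) \<in> g ` B" using img by simp
  then obtain q' where q': "q' \<in> B" "g q' = ((c+1) mod 3, k)" by (auto simp del: mod_Suc)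
  have c2: "\<forall>k\<le>n. \<forall>i\<le>2. \<forall>j\<le>2. R (i,k) (j,k) \<longrightarrow> i = j" using sp unfolding section_poset_def by simp
  have ne: "c \<noteq> (c+1) mod 3"
  proof -
    have "c = 0 \<or> c = 1 \<or> c = 2" using ck2 by auto
    then show ?thesis by (elim disjE) simp_all
  qed
  have m: "(c+1) mod 3 \<le> 2" by simp
  have r1: "\<not> R (c,k) ((c+1) mod 3, k)" using c2[rule_format, OF ck2(2) ck2(1) m] ne by blast
  have r2: "\<not> R ((c+1) mod 3, k) (c,k)" using c2[rule_format, OF ck2(2) m ck2(1)] ne by metis
  have "\<not> le q q'" using og[rule_format, OF q q'(1)] ck q'(2) r1 by simp
  moreover have "\<not> le q' q" using og[rule_format, OF q'(1) q] ck q'(2) r2 by simp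
  ultimately show ?thesis using q'(1) by blast
qed

lemma section_levels:
  assumes st: "stk P le lev N" and BP: "B \<subseteq> P" and sp: "section_poset n R"
    and iso: "order_iso B le (section_carrier n) R"
  shows "\<exists>a. (\<forall>p\<in>B. a \<le> lev p \<and> lev p \<le> a + n) \<and> (\<forall>p\<in>P. a \<le> lev p \<and> lev p \<le> a + n \<longrightarrow> p \<in> B)"
proof -
  note mono = stk_mono[OF st] and C2 = stk_C2[OF st]
  obtain g where bij: "bij_betw g B (section_carrier n)" and og: "\<forall>x\<in>B. \<forall>y\<in>B. le x y \<longleftrightarrow> R (g x) (g y)"
    using iso unfolding order_iso_def by blast
  define h where "h = inv_into B g"
  have hbij: "bij_betw h (section_carrier n) B" unfolding h_def by (rule bij_betw_inv_into[OF bij])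
  have hB: "\<And>u. u \<in> section_carrier n \<Longrightarrow> h u \<in> B" using hbij unfolding bij_betw_def by blast
  have gh: "\<And>u. u \<in> section_carrier n \<Longrightarrow> g (h u) = u" unfolding h_def using bij
    by (meson bij_betw_inv_into_right)
  have hg: "\<And>p. p \<in> B \<Longrightarrow> h (g p) = p" unfolding h_def using bij by (meson bij_betw_inv_into_left)
  have oh: "\<And>u v. u \<in> section_carrier n \<Longrightarrow> v \<in> section_carrier n \<Longrightarrow> le (h u) (h v) \<longleftrightarrow> R u v"
  proof -
    fix u v assume uv: "u \<in> section_carrier n" "v \<in> section_carrier n"
    have "le (h u) (h v) \<longleftrightarrow> R (g (h u)) (g (h v))" using og hB[OF uv(1)] hB[OF uv(2)] by blast
    then show "le (h u) (h v) \<longleftrightarrow> R u v" using gh[OF uv(1)] gh[OF uv(2)] by simp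
  qed
  have inC: "\<And>c k. c \<le> 2 \<Longrightarrow> k \<le> n \<Longrightarrow> (c,k) \<in> section_carrier n" unfolding section_carrier_def by auto
  have hinj: "\<And>u v. u \<in> section_carrier n \<Longrightarrow> v \<in> section_carrier n \<Longrightarrow> h u = h v \<Longrightarrow> u = v"
  proof -
    fix u v assume uv: "u \<in> section_carrier n" "v \<in> section_carrier n" "h u = h v"
    have "g (h u) = g (h v)" using uv(3) by simp
    then show "u = v" using gh[OF uv(1)] gh[OF uv(2)] by simp
  qed
  have c1: "\<forall>i\<le>2. \<forall>k l. k < l \<and> l \<le> n \<longrightarrow> lt R (i,k) (i,l)"
    and c2: "\<forall>k\<le>n. \<forall>i\<le>2. \<forall>j\<le>2. R (i,k) (j,k) \<longrightarrow> i = j"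
    and c4: "\<forall>k<n. \<exists>i\<le>2. \<exists>j\<le>2. \<not> lt R (i,k) (j, Suc k)"
    using sp unfolding section_poset_def by simp_all
  define A where "A = (\<lambda>k. lev (h (0,k)))"
  have lvl: "\<And>k. k \<le> n \<Longrightarrow> (\<forall>c\<le>2. lev (h (c,k)) = A k) \<and> {p\<in>P. lev p = A k} = {h (0,k), h (1,k), h (2,k)}"
  proof -
    fix k assume k: "k \<le> n"
    have mem: "(0,k) \<in> section_carrier n" "(1,k) \<in> section_carrier n" "(2,k) \<in> section_carrier n"
      using inC k by auto
    have P3: "h (0,k) \<in> P" "h (1,k) \<in> P" "h (2,k) \<in> P" using hB mem BP by blast+
    have d: "h (0,k) \<noteq> h (1,k)" "h (1,k) \<noteq> h (2,k)" "h (0,k) \<noteq> h (2,k)"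
    proof -
      show "h (0,k) \<noteq> h (1,k)" using hinj[OF mem(1) mem(2)] by auto
      show "h (1,k) \<noteq> h (2,k)" using hinj[OF mem(2) mem(3)] by auto
      show "h (0,k) \<noteq> h (2,k)" using hinj[OF mem(1) mem(3)] by auto
    qed
    have c2k: "\<And>i j. i \<le> 2 \<Longrightarrow> j \<le> 2 \<Longrightarrow> R (i,k) (j,k) \<Longrightarrow> i = j" using c2 k by blast
    have inc: "\<not> le (h (0,k)) (h (1,k))" "\<not> le (h (1,k)) (h (0,k))" "\<not> le (h (0,k)) (h (2,k))"
      "\<not> le (h (2,k)) (h (0,k))" "\<not> le (h (1,k)) (h (2,k))" "\<not> le (h (2,k)) (h (1,k))"
    proof -
      show "\<not> le (h (0,k)) (h (1,k))" using oh[OF mem(1) mem(2)] c2k[of 0 1] by auto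
      show "\<not> le (h (1,k)) (h (0,k))" using oh[OF mem(2) mem(1)] c2k[of 1 0] by auto
      show "\<not> le (h (0,k)) (h (2,k))" using oh[OF mem(1) mem(3)] c2k[of 0 2] by auto
      show "\<not> le (h (2,k)) (h (0,k))" using oh[OF mem(3) mem(1)] c2k[of 2 0] by auto
      show "\<not> le (h (1,k)) (h (2,k))" using oh[OF mem(2) mem(3)] c2k[of 1 2] by auto
      show "\<not> le (h (2,k)) (h (1,k))" using oh[OF mem(3) mem(2)] c2k[of 2 1] by auto
    qed
    note a3 = anti3[OF st P3 d inc]
    show "(\<forall>c\<le>2. lev (h (c,k)) = A k) \<and> {p\<in>P. lev p = A k} = {h (0,k), h (1,k), h (2,k)}"
    proof (intro conjI allI impI)
      fix c :: nat assume "c \<le> 2"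
      then have "c = 0 \<or> c = 1 \<or> c = 2" by auto
      then show "lev (h (c,k)) = A k" using a3 unfolding A_def by auto
    next
      show "{p\<in>P. lev p = A k} = {h (0,k), h (1,k), h (2,k)}" using a3(3) unfolding A_def .
    qed
  qed
  have step: "\<And>k. k < n \<Longrightarrow> A (Suc k) = Suc (A k)"
  proof -
    fix k assume k: "k < n"
    have m0: "(0,k) \<in> section_carrier n" "(0,Suc k) \<in> section_carrier n" using inC k by auto
    have "lt R (0,k) (0,Suc k)" using c1 k by auto
    then have "le (h (0,k)) (h (0,Suc k))" "h (0,k) \<noteq> h (0,Suc k)" using oh[OF m0] hinj[OF m0] unfolding lt_def by auto
    then have lt1: "A k < A (Suc k)" using mono hB m0 BP unfolding A_def by blast
    obtain i j where ij: "i \<le> 2" "j \<le> 2" "\<not> lt R (i,k) (j, Suc k)" using c4 k by blast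
    have mij: "(i,k) \<in> section_carrier n" "(j,Suc k) \<in> section_carrier n" using inC k ij by auto
    have "\<not> R (i,k) (j, Suc k)" using ij unfolding lt_def by auto
    then have nle: "\<not> le (h (i,k)) (h (j,Suc k))" using oh[OF mij] by simp
    have "lev (h (i,k)) = A k" "lev (h (j,Suc k)) = A (Suc k)" using lvl k ij by auto
    then have "\<not> A k + 2 \<le> A (Suc k)" using C2 nle hB mij BP by (metis subsetD)
    then show "A (Suc k) = Suc (A k)" using lt1 by linarith
  qed
  have Ak: "\<And>k. k \<le> n \<Longrightarrow> A k = A 0 + k"
  proof -
    fix k show "k \<le> n \<Longrightarrow> A k = A 0 + k"
    proof (induction k)
      case 0 then show ?case by simp
    next
      case (Suc k) then show ?case using step by simp
    qed
  qed
  have part1: "\<forall>p\<in>B. A 0 \<le> lev p \<and> lev p \<le> A 0 + n"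
  proof
    fix p assume p: "p \<in> B"
    obtain c k where ck: "g p = (c,k)" by (cases "g p") auto
    have "g p \<in> section_carrier n" by (rule bij_betw_apply[OF bij p])
    then have ck2: "c \<le> 2" "k \<le> n" using ck unfolding section_carrier_def by auto
    have pe: "p = h (c,k)" using hg[OF p] ck by simp
    have "lev p = A k" using lvl[OF ck2(2)] ck2(1) pe by blast
    then show "A 0 \<le> lev p \<and> lev p \<le> A 0 + n" using Ak[OF ck2(2)] ck2(2) by simp
  qed
  have part2: "\<forall>p\<in>P. A 0 \<le> lev p \<and> lev p \<le> A 0 + n \<longrightarrow> p \<in> B"
  proof (intro ballI impI)
    fix p assume p: "p \<in> P" "A 0 \<le> lev p \<and> lev p \<le> A 0 + n"
    define k where "k = lev p - A 0"
    have k1: "k \<le> n" using p(2) unfolding k_def by linarith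
    have k2: "lev p = A k" using Ak[OF k1] p(2) unfolding k_def by linarith
    have "p \<in> {p\<in>P. lev p = A k}" using p(1) k2 by simp
    then have "p \<in> {h (0,k), h (1,k), h (2,k)}" using lvl[OF k1] by blast
    then have "p = h (0,k) \<or> p = h (1,k) \<or> p = h (2,k)" by blast
    moreover have "h (0,k) \<in> B" "h (1,k) \<in> B" "h (2,k) \<in> B" using hB inC k1 by simp_all
    ultimately show "p \<in> B" by blast
  qed
  show ?thesis using part1 part2 by blast
qed

theorem corollary5p5:
  fixes P Q :: "'a set" and le :: "'a \<Rightarrow> 'a \<Rightarrow> bool"
  assumes "six_stack P le"
    and "retract P le Q" and "Q \<noteq> P"
    and "tower_of_sections Q le"
  shows "four_tower Q le"
proof -
  obtain N where st: "stk P le (rank P le) N" using six_stack_stk[OF assms(1)] by blast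
  define lev where "lev = rank P le"
  have st: "stk P le lev N" using st unfolding lev_def .
  obtain f where QP: "Q \<subseteq> P" and f1: "\<forall>x\<in>P. f x \<in> Q" and f2: "\<forall>x\<in>P. \<forall>y\<in>P. le x y \<longrightarrow> le (f x) (f y)"
    and f3: "\<forall>q\<in>Q. f q = q"
    using assms(2) unfolding retract_def by blast
  have poQ: "poset_on Q le" using assms(4) unfolding tower_of_sections_def by (rule conjunct1)
  have os: "ordinal_sum_of is_section Q le" using assms(4) unfolding tower_of_sections_def by (rule conjunct2)
  obtain k where kP: "k \<ge> 1 \<and> (\<exists>B :: nat \<Rightarrow> 'a set. Q = (\<Union>i<k. B i) \<and>
      (\<forall>i<k. \<forall>j<k. i \<noteq> j \<longrightarrow> B i \<inter> B j = {}) \<and>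
      (\<forall>i<k. is_section (B i) le) \<and>
      (\<forall>i<k. \<forall>j<k. i < j \<longrightarrow> (\<forall>x\<in>B i. \<forall>y\<in>B j. le x y \<and> \<not> le y x)))"
    using os unfolding ordinal_sum_of_def by (rule exE)
  note k = kP[THEN conjunct1] and exB = kP[THEN conjunct2]
  from exB obtain B :: "nat \<Rightarrow> 'a set" where Bp: "Q = (\<Union>i<k. B i) \<and>
      (\<forall>i<k. \<forall>j<k. i \<noteq> j \<longrightarrow> B i \<inter> B j = {}) \<and>
      (\<forall>i<k. is_section (B i) le) \<and>
      (\<forall>i<k. \<forall>j<k. i < j \<longrightarrow> (\<forall>x\<in>B i. \<forall>y\<in>B j. le x y \<and> \<not> le y x))" by (elim exE)
  have QB: "Q = (\<Union>i<k. B i)" using Bp by (rule conjunct1)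
  have dis: "\<forall>i<k. \<forall>j<k. i \<noteq> j \<longrightarrow> B i \<inter> B j = {}" using Bp[THEN conjunct2] by (rule conjunct1)
  have secs: "\<forall>i<k. is_section (B i) le" using Bp[THEN conjunct2, THEN conjunct2] by (rule conjunct1)
  have ord: "\<forall>i<k. \<forall>j<k. i < j \<longrightarrow> (\<forall>x\<in>B i. \<forall>y\<in>B j. le x y \<and> \<not> le y x)"
    using Bp[THEN conjunct2, THEN conjunct2] by (rule conjunct2)
  show ?thesis
  proof (cases "\<forall>i<k. two_antichain (B i) le")
    case True
    have "\<exists>B'. Q = (\<Union>i<k. B' i) \<and> (\<forall>i<k. \<forall>j<k. i \<noteq> j \<longrightarrow> B' i \<inter> B' j = {}) \<and>
      (\<forall>i<k. two_antichain (B' i) le) \<and> (\<forall>i<k. \<forall>j<k. i < j \<longrightarrow> (\<forall>x\<in>B' i. \<forall>y\<in>B' j. le x y \<and> \<not> le y x))"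
      by (rule exI[of _ B]) (intro conjI QB dis True ord)
    then have "ordinal_sum_of two_antichain Q le" unfolding ordinal_sum_of_def using k by blast
    then show ?thesis unfolding four_tower_def using poQ by blast
  next
    case False
    then obtain j where j: "j < k" "\<not> two_antichain (B j) le" by blast
    have "is_section (B j) le" using secs j(1) by blast
    then have "\<exists>n R. section_poset n R \<and> order_iso (B j) le (section_carrier n) R"
      using j(2) unfolding is_section_def by blast
    then obtain n R where sp: "section_poset n R" and iso: "order_iso (B j) le (section_carrier n) R"
      by blast
    define S where "S = B j"
    have SQ: "S \<subseteq> Q" unfolding S_def QB using j(1) by blast
    have SP: "S \<subseteq> P" using SQ QP by (rule subset_trans)
    have "\<exists>a. (\<forall>p\<in>S. a \<le> lev p \<and> lev p \<le> a + n) \<and> (\<forall>p\<in>P. a \<le> lev p \<and> lev p \<le> a + n \<longrightarrow> p \<in> S)"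
      by (rule section_levels[OF st SP sp iso[folded S_def]])
    then obtain a where a1: "\<forall>p\<in>S. a \<le> lev p \<and> lev p \<le> a + n" and a2: "\<forall>p\<in>P. a \<le> lev p \<and> lev p \<le> a + n \<longrightarrow> p \<in> S"
      by blast
    note bnd = stk_bnd[OF st] and c3 = stk_c3[OF st] and mono = stk_mono[OF st]
    have partner: "\<And>q. q \<in> Q \<Longrightarrow> q \<notin> S \<Longrightarrow> \<exists>q'\<in>Q. \<not> le q q' \<and> \<not> le q' q \<and>
        ((\<forall>s\<in>S. le s q \<and> le s q') \<or> (\<forall>s\<in>S. le q s \<and> le q' s))"
    proof -
      fix q assume q: "q \<in> Q" "q \<notin> S"
      have "q \<in> (\<Union>i<k. B i)" using q(1) QB by simp
      then obtain i where i: "i < k" "q \<in> B i" by blast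
      have ij: "i \<noteq> j" using i q unfolding S_def by blast
      obtain q' where q': "q' \<in> B i" "\<not> le q q'" "\<not> le q' q"
        using block_partner[OF secs[rule_format, OF i(1)] i(2)] by blast
      have "q' \<in> (\<Union>i<k. B i)" using i(1) q'(1) by blast
      then have q'Q: "q' \<in> Q" using QB by simp
      show "\<exists>q'\<in>Q. \<not> le q q' \<and> \<not> le q' q \<and> ((\<forall>s\<in>S. le s q \<and> le s q') \<or> (\<forall>s\<in>S. le q s \<and> le q' s))"
      proof (cases "i < j")
        case True
        have o: "\<forall>x\<in>B i. \<forall>y\<in>B j. le x y \<and> \<not> le y x" using ord i(1) j(1) True by blast
        have "\<forall>s\<in>S. le q s \<and> le q' s" unfolding S_def using o i(2) q'(1) by blast
        then show ?thesis using q'Q q' by blast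
      next
        case False
        then have ji: "j < i" using ij by simp
        have o: "\<forall>x\<in>B j. \<forall>y\<in>B i. le x y \<and> \<not> le y x" using ord i(1) j(1) ji by blast
        have "\<forall>s\<in>S. le s q \<and> le s q'" unfolding S_def using o i(2) q'(1) by blast
        then show ?thesis using q'Q q' by blast
      qed
    qed
    have aN: "a \<le> N"
    proof -
      obtain g where gb: "bij_betw g S (section_carrier n)" using iso unfolding S_def order_iso_def by blast
      have "(0,0) \<in> section_carrier n" unfolding section_carrier_def by simp
      then have "(0,0) \<in> g ` S" using gb unfolding bij_betw_def by simp
      then obtain s where s: "s \<in> S" by blast
      have "s \<in> P" using s SP by blast
      then have "a \<le> lev s" "lev s \<le> N" using a1 bnd s by auto
      then show ?thesis by linarith
    qed
    have Lne: "\<And>i. i \<le> N \<Longrightarrow> \<exists>s\<in>P. lev s = i"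
    proof -
      fix i assume "i \<le> N"
      then have c: "card {p\<in>P. lev p = i} = 3" using c3 by blast
      have "{p\<in>P. lev p = i} \<noteq> {}"
      proof
        assume "{p\<in>P. lev p = i} = {}"
        then have "card {p\<in>P. lev p = i} = 0" by (simp only: card.empty)
        then show False using c by simp
      qed
      then show "\<exists>s\<in>P. lev s = i" by blast
    qed
    have "a + n < N \<or> 0 < a \<or> (a = 0 \<and> N \<le> a + n)" by linarith
    then consider "a + n < N" | "0 < a" | "a = 0" "N \<le> a + n" by blast
    then show ?thesis
    proof cases
      case 3
      have "P \<subseteq> Q"
      proof
        fix p assume "p \<in> P"
        then have "lev p \<le> a + n" using bnd 3 by force
        then have "p \<in> S" using a2 \<open>p \<in> P\<close> 3 by simp
        then show "p \<in> Q" using SQ by blast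
      qed
      then show ?thesis using QP assms(3) by blast
    next
      case 1
      define b where "b = a + n"
      have "b \<le> N" using 1 unfolding b_def by simp
      then obtain s0 where s0: "s0 \<in> P" "lev s0 = b" using Lne by blast
      have s0S: "s0 \<in> S" using a2 s0 unfolding b_def by simp
      have up: "\<And>q. q \<in> Q \<Longrightarrow> b < lev q \<Longrightarrow> \<exists>q'\<in>Q. \<not> le q q' \<and> \<not> le q' q \<and> (\<forall>s\<in>S. le s q \<and> le s q')"
      proof -
        fix q assume q: "q \<in> Q" "b < lev q"
        have "q \<notin> S"
        proof
          assume "q \<in> S" then have "lev q \<le> a + n" using a1 by blast
          then show False using q unfolding b_def by simp
        qed
        then obtain q' where q': "q' \<in> Q" "\<not> le q q'" "\<not> le q' q"
          "(\<forall>s\<in>S. le s q \<and> le s q') \<or> (\<forall>s\<in>S. le q s \<and> le q' s)" using partner q by blast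
        have "\<not> (\<forall>s\<in>S. le q s \<and> le q' s)"
        proof
          assume "\<forall>s\<in>S. le q s \<and> le q' s"
          then have "le q s0" using s0S by blast
          moreover have "q \<noteq> s0" using q s0 by auto
          ultimately have "lev q < lev s0" using mono q QP s0 by blast
          then show False using q s0 by simp
        qed
        then show "\<exists>q'\<in>Q. \<not> le q q' \<and> \<not> le q' q \<and> (\<forall>s\<in>S. le s q \<and> le s q')" using q' by blast
      qed
      have False
      proof (rule top_case[OF st QP f1 f2 f3, of b])
        show "b < N" using 1 unfolding b_def .
        show "\<forall>p\<in>P. lev p = b \<longrightarrow> p \<in> Q" using a2 SQ unfolding b_def by auto
        show "\<forall>q\<in>Q. b < lev q \<longrightarrow> (\<forall>y\<in>P. lev y = b \<longrightarrow> le y q)"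
        proof (intro ballI impI)
          fix q y assume q: "q \<in> Q" "b < lev q" and y: "y \<in> P" "lev y = b"
          have "y \<in> S" using a2 y unfolding b_def by simp
          then show "le y q" using up[OF q] by blast
        qed
        show "\<forall>q\<in>Q. b < lev q \<longrightarrow> (\<exists>q'\<in>Q. b < lev q' \<and> \<not> le q q' \<and> \<not> le q' q)"
        proof (intro ballI impI)
          fix q assume q: "q \<in> Q" "b < lev q"
          then obtain q' where q': "q' \<in> Q" "\<not> le q q'" "\<not> le q' q" "\<forall>s\<in>S. le s q \<and> le s q'" using up by blast
          have "le s0 q'" "le s0 q" using q' s0S by auto
          then have "q' \<noteq> s0" using q' by auto
          then have "lev s0 < lev q'" using mono \<open>le s0 q'\<close> s0 q' QP by blast
          then show "\<exists>q'\<in>Q. b < lev q' \<and> \<not> le q q' \<and> \<not> le q' q" using q' s0 by auto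
        qed
      qed
      then show ?thesis by blast
    next
      case 2
      obtain s0 where s0: "s0 \<in> P" "lev s0 = a" using Lne aN by blast
      have s0S: "s0 \<in> S" using a2 s0 by simp
      have dn: "\<And>q. q \<in> Q \<Longrightarrow> lev q < a \<Longrightarrow> \<exists>q'\<in>Q. \<not> le q q' \<and> \<not> le q' q \<and> (\<forall>s\<in>S. le q s \<and> le q' s)"
      proof -
        fix q assume q: "q \<in> Q" "lev q < a"
        have "q \<notin> S"
        proof
          assume "q \<in> S" then have "a \<le> lev q" using a1 by blast
          then show False using q by simp
        qed
        then obtain q' where q': "q' \<in> Q" "\<not> le q q'" "\<not> le q' q"
          "(\<forall>s\<in>S. le s q \<and> le s q') \<or> (\<forall>s\<in>S. le q s \<and> le q' s)" using partner q by blast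
        have "\<not> (\<forall>s\<in>S. le s q \<and> le s q')"
        proof
          assume "\<forall>s\<in>S. le s q \<and> le s q'"
          then have "le s0 q" using s0S by blast
          moreover have "q \<noteq> s0" using q s0 by auto
          ultimately have "lev s0 < lev q" using mono q QP s0 by blast
          then show False using q s0 by simp
        qed
        then show "\<exists>q'\<in>Q. \<not> le q q' \<and> \<not> le q' q \<and> (\<forall>s\<in>S. le q s \<and> le q' s)" using q' by blast
      qed
      have f2': "\<forall>x\<in>P. \<forall>y\<in>P. le y x \<longrightarrow> le (f y) (f x)" using f2 by blast
      have False
      proof (rule top_case[OF stk_dual[OF st] QP f1 f2' f3, of "N - a"])
        show "N - a < N" using 2 aN by simp
        show "\<forall>p\<in>P. N - lev p = N - a \<longrightarrow> p \<in> Q"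
        proof (intro ballI impI)
          fix p assume p: "p \<in> P" "N - lev p = N - a"
          moreover have "lev p \<le> N" using bnd p by blast
          ultimately have "lev p = a" using aN by linarith
          then show "p \<in> Q" using a2 p SQ by auto
        qed
        show "\<forall>q\<in>Q. N - a < N - lev q \<longrightarrow> (\<forall>y\<in>P. N - lev y = N - a \<longrightarrow> le q y)"
        proof (intro ballI impI)
          fix q y assume q: "q \<in> Q" "N - a < N - lev q" and y: "y \<in> P" "N - lev y = N - a"
          have "lev q < a" using q by linarith
          then obtain q' where "\<forall>s\<in>S. le q s \<and> le q' s" using dn q by blast
          moreover have "lev y \<le> N" using bnd y by blast
          then have "lev y = a" using y aN by linarith
          then have "y \<in> S" using a2 y by simp
          ultimately show "le q y" by blast
        qed
        show "\<forall>q\<in>Q. N - a < N - lev q \<longrightarrow> (\<exists>q'\<in>Q. N - a < N - lev q' \<and> \<not> le q' q \<and> \<not> le q q')"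
        proof (intro ballI impI)
          fix q assume q: "q \<in> Q" "N - a < N - lev q"
          have "lev q < a" using q by linarith
          then obtain q' where q': "q' \<in> Q" "\<not> le q q'" "\<not> le q' q" "\<forall>s\<in>S. le q s \<and> le q' s" using dn q by blast
          have "le q' s0" "le q s0" using q' s0S by auto
          then have "q' \<noteq> s0" using q' by auto
          then have "lev q' < lev s0" using mono \<open>le q' s0\<close> s0 q' QP by blast
          then have "N - a < N - lev q'" using s0 aN by linarith
          then show "\<exists>q'\<in>Q. N - a < N - lev q' \<and> \<not> le q' q \<and> \<not> le q q'" using q' by auto
        qed
      qed
      then show ?thesis by blast
    qed
  qed
qed

end
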